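(* Let $K$ be a field, $X$ a finite connected poset, $\varphi$ an elementary Lie automorphism of $I(X,K)$, $\theta=\theta_\varphi$, $\sigma=\sigma_\varphi$, and $x<y<z$ in $X$. Then either $\theta(e_{xz})=\theta(e_{xy})\theta(e_{yz})$, in which case $\sigma(x,z)=\sigma(x,y)\sigma(y,z)$, or $\theta(e_{xz})=\theta(e_{yz})\theta(e_{xy})$, in which case $\sigma(x,z)=-\sigma(x,y)\sigma(y,z)$.
   Context: $I(X,K)$ is the incidence algebra: functions $f:X\times X\to K$ with $f(x,y)=0$ unless $x\le y$, product $(fg)(x,y)=\sum_{x\le t\le y}f(x,t)g(t,y)$; $e_{xy}$ ($x\le y$) is the basis element equal to $1$ at $(x,y)$ and $0$ elsewhere. $B=\{e_{xy}:x<y\}$, $X^2_<=\{(x,y):x<y\}$. A Lie automorphism is a bijective linear map preserving $[f,g]=fg-gf$. With $l(\lfloor x,y\rfloor)$ the maximal length of a chain in $\{z:x\le z\le y\}$ and $L_i=\mathrm{span}_K\{e_{xy}:l(\lfloor x,y\rfloor)=i\}$, for a Lie automorphism $\psi$ let $\widetilde\psi$ send $e_{xy}\in L_i$ to the $L_i$-component of $\psi(e_{xy})$. A Lie automorphism $\varphi$ is elementary if $\varphi=\widetilde\psi$ for some Lie automorphism $\psi$ (equivalently $\varphi(L_i)\subseteq L_i$ for all $i$). For elementary $\varphi$, for each $x<y$ there are a unique $e_{uv}\in B$ and a unique $k\in K^*$ with $\varphi(e_{xy})=k e_{uv}$; set $\theta_\varphi(e_{xy})=e_{uv}$ and $\sigma_\varphi(x,y)=k$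 (then $\theta_\varphi:B\to B$ is a bijection). Connected means any two elements are joined by a sequence in which consecutive elements are in a covering relation. *)

theory Defs
  imports Main
begin

text \<open>Finite poset X is modelled as a type of class finite and order.
  Elements of the incidence algebra I(X,K) are functions 'a => 'a => 'k vanishing
  off the order relation.\<close>

definition incidence :: "('a::{finite,order} \<Rightarrow> 'a \<Rightarrow> 'k::field) set" where
  "incidence = {f. \<forall>x y. \<not> x \<le> y \<longrightarrow> f x y = 0}"

definition inc_mult :: "('a::{finite,order} \<Rightarrow> 'a \<Rightarrow> 'k::field) \<Rightarrow> ('a \<Rightarrow> 'a \<Rightarrow> 'k) \<Rightarrow> 'a \<Rightarrow> 'a \<Rightarrow> 'k" where
  "inc_mult f g = (\<lambda>x y. \<Sum>t\<in>{t. x \<le> t \<and> t \<le> y}. f x t * g t y)"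

definition inc_add :: "('a \<Rightarrow> 'a \<Rightarrow> 'k::field) \<Rightarrow> ('a \<Rightarrow> 'a \<Rightarrow> 'k) \<Rightarrow> 'a \<Rightarrow> 'a \<Rightarrow> 'k" where
  "inc_add f g = (\<lambda>x y. f x y + g x y)"

definition inc_smult :: "'k::field \<Rightarrow> ('a \<Rightarrow> 'a \<Rightarrow> 'k) \<Rightarrow> 'a \<Rightarrow> 'a \<Rightarrow> 'k" where
  "inc_smult k f = (\<lambda>x y. k * f x y)"

definition inc_bracket :: "('a::{finite,order} \<Rightarrow> 'a \<Rightarrow> 'k::field) \<Rightarrow> ('a \<Rightarrow> 'a \<Rightarrow> 'k) \<Rightarrow> 'a \<Rightarrow> 'a \<Rightarrow> 'k" where
  "inc_bracket f g = (\<lambda>x y. inc_mult f g x y - inc_mult g f x y)"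

definition ebas :: "'a \<Rightarrow> 'a \<Rightarrow> 'a \<Rightarrow> 'a \<Rightarrow> 'k::field" where
  "ebas x y = (\<lambda>u v. if u = x \<and> v = y then 1 else 0)"

definition Bset :: "('a::{finite,order} \<Rightarrow> 'a \<Rightarrow> 'k::field) set" where
  "Bset = {ebas x y | x y. x < y}"

definition lie_automorphism :: "(('a::{finite,order} \<Rightarrow> 'a \<Rightarrow> 'k::field) \<Rightarrow> ('a \<Rightarrow> 'a \<Rightarrow> 'k)) \<Rightarrow> bool" where
  "lie_automorphism \<psi> \<longleftrightarrow>
     bij_betw \<psi> incidence incidence \<and>
     (\<forall>f\<in>incidence. \<forall>g\<in>incidence. \<forall>a b.
        \<psi> (inc_add (inc_smult a f) (inc_smult b g)) = inc_add (inc_smult a (\<psi> f)) (inc_smult b (\<psi> g))) \<and>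
     (\<forall>f\<in>incidence. \<forall>g\<in>incidence. \<psi> (inc_bracket f g) = inc_bracket (\<psi> f) (\<psi> g))"

definition interval_length :: "'a::{finite,order} \<Rightarrow> 'a \<Rightarrow> nat" where
  "interval_length x y = Max {card C - 1 | C. C \<noteq> {} \<and> C \<subseteq> {z. x \<le> z \<and> z \<le> y} \<and>
                                   (\<forall>a\<in>C. \<forall>b\<in>C. a \<le> b \<or> b \<le> a)}"

definition L_comp :: "nat \<Rightarrow> ('a::{finite,order} \<Rightarrow> 'a \<Rightarrow> 'k::field) \<Rightarrow> 'a \<Rightarrow> 'a \<Rightarrow> 'k" where
  "L_comp i g = (\<lambda>u v. if u \<le> v \<and> interval_length u v = i then g u v else 0)"

definition tilde :: "(('a::{finite,order} \<Rightarrow> 'a \<Rightarrow> 'k::field) \<Rightarrow> ('a \<Rightarrow> 'a \<Rightarrow> 'k)) \<Rightarrow> ('a \<Rightarrow> 'a \<Rightarrow> 'k) \<Rightarrow> 'a \<Rightarrow> 'a \<Rightarrow> 'k" where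
  "tilde \<psi> f = (\<lambda>u v. \<Sum>p\<in>{(x,y). x \<le> y}.
                   f (fst p) (snd p) * L_comp (interval_length (fst p) (snd p)) (\<psi> (ebas (fst p) (snd p))) u v)"

definition elementary :: "(('a::{finite,order} \<Rightarrow> 'a \<Rightarrow> 'k::field) \<Rightarrow> ('a \<Rightarrow> 'a \<Rightarrow> 'k)) \<Rightarrow> bool" where
  "elementary \<phi> \<longleftrightarrow> lie_automorphism \<phi> \<and>
     (\<exists>\<psi>. lie_automorphism \<psi> \<and> (\<forall>f\<in>incidence. \<phi> f = tilde \<psi> f))"

definition theta :: "(('a::{finite,order} \<Rightarrow> 'a \<Rightarrow> 'k::field) \<Rightarrow> ('a \<Rightarrow> 'a \<Rightarrow> 'k)) \<Rightarrow> ('a \<Rightarrow> 'a \<Rightarrow> 'k) \<Rightarrow> ('a \<Rightarrow> 'a \<Rightarrow> 'k)" where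
  "theta \<phi> b = (THE c. c \<in> Bset \<and> (\<exists>k. k \<noteq> 0 \<and> \<phi> b = inc_smult k c))"

definition sigma :: "(('a::{finite,order} \<Rightarrow> 'a \<Rightarrow> 'k::field) \<Rightarrow> ('a \<Rightarrow> 'a \<Rightarrow> 'k)) \<Rightarrow> 'a \<Rightarrow> 'a \<Rightarrow> 'k" where
  "sigma \<phi> x y = (THE k. k \<noteq> 0 \<and> \<phi> (ebas x y) = inc_smult k (theta \<phi> (ebas x y)))"

definition covers :: "'a::order \<Rightarrow> 'a \<Rightarrow> bool" where
  "covers a b \<longleftrightarrow> a < b \<and> \<not> (\<exists>c. a < c \<and> c < b)"

definition poset_connected :: "'a::order itself \<Rightarrow> bool" where
  "poset_connected _ \<longleftrightarrow> (\<forall>a b::'a. (\<lambda>u v. covers u v \<or> covers v u)\<^sup>*\<^sup>* a b)"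

end

theory Submission
  imports Defs
begin


lemma ebas_apply: "ebas x y u v = (if u = x \<and> v = y then 1 else 0)"
  by (simp add: ebas_def)

lemma ebas_inc: "(x::'a::{finite,order}) \<le> y \<Longrightarrow> (ebas x y :: 'a \<Rightarrow> 'a \<Rightarrow> 'k::field) \<in> incidence"
  by (auto simp: incidence_def ebas_def)

lemma il_refl: "interval_length (u::'a::{finite,order}) u = 0"
proof -
  have "{card C - 1 | C. C \<noteq> {} \<and> C \<subseteq> {z. u \<le> z \<and> z \<le> u} \<and>
          (\<forall>a\<in>C. \<forall>b\<in>C. a \<le> b \<or> b \<le> a)} = {0}"
  proof (intro equalityI subsetI)
    fix n assume "n \<in> {card C - 1 | C. C \<noteq> {} \<and> C \<subseteq> {z. u \<le> z \<and> z \<le> u} \<and>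
          (\<forall>a\<in>C. \<forall>b\<in>C. a \<le> b \<or> b \<le> a)}"
    then obtain C where C: "n = card C - 1" "C \<noteq> {}" "C \<subseteq> {z. u \<le> z \<and> z \<le> u}" by blast
    have "C \<subseteq> {u}" using C(3) by (auto intro: order.antisym)
    with C(2) have "C = {u}" by blast
    with C(1) show "n \<in> {0}" by simp
  next
    fix n assume "n \<in> ({0}::nat set)"
    then show "n \<in> {card C - 1 | C. C \<noteq> {} \<and> C \<subseteq> {z. u \<le> z \<and> z \<le> u} \<and>
          (\<forall>a\<in>C. \<forall>b\<in>C. a \<le> b \<or> b \<le> a)}"
      by (intro CollectI exI[of _ "{u}"]) auto
  qed
  then show ?thesis unfolding interval_length_def by simp
qed

lemma il_pos: assumes "(x::'a::{finite,order}) < y" shows "interval_length x y \<noteq> 0"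
proof -
  let ?S = "{card C - 1 | C. C \<noteq> {} \<and> C \<subseteq> {z. x \<le> z \<and> z \<le> y} \<and>
          (\<forall>a\<in>C. \<forall>b\<in>C. a \<le> b \<or> b \<le> a)}"
  have "1 \<in> ?S" using assms
    by (intro CollectI exI[of _ "{x,y}"]) auto
  moreover have "finite ?S" by simp
  ultimately have "1 \<le> Max ?S" by (meson Max_ge)
  then show ?thesis unfolding interval_length_def by simp
qed

lemma mult_diag_left:
  assumes g: "\<forall>p q. p \<noteq> q \<longrightarrow> g p q = 0" and h: "h \<in> incidence"
  shows "inc_mult g h a b = g a a * (h a b :: 'k::field)"
proof (cases "(a::'a::{finite,order}) \<le> b")
  case True
  have "inc_mult g h a b = (\<Sum>t\<in>{t. a \<le> t \<and> t \<le> b}. if t = a then g a a * h a b else 0)"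
    unfolding inc_mult_def using g by (intro sum.cong) auto
  also have "\<dots> = g a a * h a b" using True by (subst sum.delta) auto
  finally show ?thesis .
next
  case False
  then have E: "{t. a \<le> t \<and> t \<le> b} = {}" by (auto dest: order_trans)
  have "inc_mult g h a b = 0" unfolding inc_mult_def by (simp only: E sum.empty)
  then show ?thesis using h False by (simp add: incidence_def)
qed

lemma mult_diag_right:
  assumes g: "\<forall>p q. p \<noteq> q \<longrightarrow> g p q = 0" and h: "h \<in> incidence"
  shows "inc_mult h g a b = h a b * (g b b :: 'k::field)"
proof (cases "(a::'a::{finite,order}) \<le> b")
  case True
  have "inc_mult h g a b = (\<Sum>t\<in>{t. a \<le> t \<and> t \<le> b}. if t = b then h a b * g b b else 0)"
    unfolding inc_mult_def using g by (intro sum.cong) auto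
  also have "\<dots> = h a b * g b b" using True by (subst sum.delta) auto
  finally show ?thesis .
next
  case False
  then have E: "{t. a \<le> t \<and> t \<le> b} = {}" by (auto dest: order_trans)
  have "inc_mult h g a b = 0" unfolding inc_mult_def by (simp only: E sum.empty)
  then show ?thesis using h False by (simp add: incidence_def)
qed

lemma ebas_mult:
  "inc_mult (ebas u v) (ebas u' v') a b =
     (if v = u' \<and> (u::'a::{finite,order}) \<le> v \<and> v \<le> v' \<and> a = u \<and> b = v' then 1 else (0::'k::field))"
proof -
  have "inc_mult (ebas u v) (ebas u' v') a b =
     (\<Sum>t\<in>{t. a \<le> t \<and> t \<le> b}. if t = v then (if a = u \<and> v = u' \<and> b = v' then 1 else (0::'k)) else 0)"
    unfolding inc_mult_def ebas_def by (intro sum.cong) auto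
  also have "\<dots> = (if v = u' \<and> u \<le> v \<and> v \<le> v' \<and> a = u \<and> b = v' then 1 else 0)"
    by (subst sum.delta) auto
  finally show ?thesis .
qed

lemma smult_mult: "inc_mult (inc_smult c f) (inc_smult d g) a b = c * d * (inc_mult f g a b :: 'k::field)"
  by (simp add: inc_mult_def inc_smult_def sum_distrib_left mult_ac)



context
  fixes \<phi> \<psi> :: "('a::{finite,order} \<Rightarrow> 'a \<Rightarrow> 'k::field) \<Rightarrow> ('a \<Rightarrow> 'a \<Rightarrow> 'k)"
  assumes lie: "lie_automorphism \<phi>"
    and til: "\<forall>f\<in>incidence. \<phi> f = tilde \<psi> f"
begin

lemma lie_parts:
  "bij_betw \<phi> incidence incidence"
  "\<forall>f\<in>incidence. \<forall>g\<in>incidence. \<forall>a b.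
        \<phi> (inc_add (inc_smult a f) (inc_smult b g)) = inc_add (inc_smult a (\<phi> f)) (inc_smult b (\<phi> g))"
  "\<forall>f\<in>incidence. \<forall>g\<in>incidence. \<phi> (inc_bracket f g) = inc_bracket (\<phi> f) (\<phi> g)"
  using lie unfolding lie_automorphism_def by simp_all

lemma lin: "f \<in> incidence \<Longrightarrow> g \<in> incidence \<Longrightarrow>
   \<phi> (inc_add (inc_smult a f) (inc_smult b g)) = inc_add (inc_smult a (\<phi> f)) (inc_smult b (\<phi> g))"
  using lie_parts(2) by blast

lemma phi_inc: "f \<in> incidence \<Longrightarrow> \<phi> f \<in> incidence"
  using lie_parts(1) unfolding bij_betw_def by blast

lemma phi_smult: assumes "f \<in> incidence" shows "\<phi> (inc_smult c f) = inc_smult c (\<phi> f)"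
proof -
  have "\<phi> (inc_add (inc_smult c f) (inc_smult 0 f)) = inc_add (inc_smult c (\<phi> f)) (inc_smult 0 (\<phi> f))"
    by (rule lin[OF assms assms])
  moreover have "inc_add (inc_smult c f) (inc_smult 0 f) = inc_smult c f"
    by (simp add: inc_add_def inc_smult_def)
  moreover have "inc_add (inc_smult c (\<phi> f)) (inc_smult 0 (\<phi> f)) = inc_smult c (\<phi> f)"
    by (simp add: inc_add_def inc_smult_def)
  ultimately show ?thesis by simp
qed

lemma zero_inc: "(\<lambda>a b. 0) \<in> incidence"
  by (simp add: incidence_def)

lemma phi_zero: "\<phi> (\<lambda>a b. 0) = (\<lambda>a b. 0)"
proof -
  have "\<phi> (inc_smult 0 (\<lambda>a b. 0)) = inc_smult 0 (\<phi> (\<lambda>a b. 0))"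
    using phi_smult zero_inc by blast
  then show ?thesis by (simp add: inc_smult_def)
qed

lemma phi_bracket: "f \<in> incidence \<Longrightarrow> g \<in> incidence \<Longrightarrow> \<phi> (inc_bracket f g) = inc_bracket (\<phi> f) (\<phi> g)"
  using lie_parts(3) by blast

lemma phi_ebas_diag: assumes "x < y" shows "\<phi> (ebas x y) u u = 0"
proof -
  have e: "(ebas x y :: 'a \<Rightarrow> 'a \<Rightarrow> 'k) \<in> incidence" using assms by (intro ebas_inc) simp
  have "\<phi> (ebas x y) u u = tilde \<psi> (ebas x y) u u" using til e by simp
  also have "\<dots> = 0" unfolding tilde_def
  proof (rule sum.neutral, rule ballI)
    fix p :: "'a \<times> 'a"
    show "ebas x y (fst p) (snd p) * L_comp (interval_length (fst p) (snd p)) (\<psi> (ebas (fst p) (snd p))) u u = 0"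
      using il_refl[of u] il_pos[OF assms] by (cases p) (auto simp: ebas_def L_comp_def)
  qed
  finally show ?thesis .
qed

lemma phi_diagpart:
  assumes f: "f \<in> incidence"
  shows "\<phi> (\<lambda>a b. if a = b then f a b else 0) = (\<lambda>a b. if a = b then \<phi> f a a else 0)"
proof -
  let ?f0 = "\<lambda>a b. if a = b then f a b else 0"
  have f0: "?f0 \<in> incidence" by (simp add: incidence_def)
  have pos: "interval_length (fst p) (snd p) \<noteq> 0" if "p \<in> {(x,y). x \<le> y}" "fst p \<noteq> snd p" for p :: "'a\<times>'a"
  proof -
    have "fst p \<le> snd p" using that(1) by auto
    then have "fst p < snd p" using that(2) by simp
    then show ?thesis by (rule il_pos)
  qed
  show ?thesis
  proof (intro ext)
    fix a b
    show "\<phi> ?f0 a b = (if a = b then \<phi> f a a else 0)"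
    proof (cases "a = b")
      case True
      have "\<phi> ?f0 a b = tilde \<psi> ?f0 a a" using til f0 True by simp
      also have "\<dots> = tilde \<psi> f a a" unfolding tilde_def
      proof (rule sum.cong[OF refl])
        fix p :: "'a\<times>'a" assume pin: "p \<in> {(x,y). x \<le> y}"
        show "?f0 (fst p) (snd p) * L_comp (interval_length (fst p) (snd p)) (\<psi> (ebas (fst p) (snd p))) a a =
              f (fst p) (snd p) * L_comp (interval_length (fst p) (snd p)) (\<psi> (ebas (fst p) (snd p))) a a"
        proof (cases "fst p = snd p")
          case False
          then have "interval_length (fst p) (snd p) \<noteq> interval_length a a"
            using pos[OF pin] il_refl[of a] by simp
          then show ?thesis by (simp add: L_comp_def)
        qed simp
      qed
      also have "\<dots> = \<phi> f a a" using til f by simp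
      finally show ?thesis using True by simp
    next
      case False
      have "\<phi> ?f0 a b = tilde \<psi> ?f0 a b" using til f0 by simp
      also have "\<dots> = 0" unfolding tilde_def
      proof (rule sum.neutral, rule ballI)
        fix p :: "'a \<times> 'a"
        show "?f0 (fst p) (snd p) * L_comp (interval_length (fst p) (snd p)) (\<psi> (ebas (fst p) (snd p))) a b = 0"
        proof (cases "fst p = snd p")
          case True
          have nz: "\<not> (a \<le> b \<and> interval_length a b = 0)"
          proof
            assume h: "a \<le> b \<and> interval_length a b = 0"
            then have "a < b" using False by (simp add: order.not_eq_order_implies_strict)
            then show False using il_pos h by blast
          qed
          have l0: "interval_length (fst p) (snd p) = 0" using True il_refl by simp
          have "L_comp (interval_length (fst p) (snd p)) (\<psi> (ebas (fst p) (snd p))) a b = 0"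
            unfolding L_comp_def l0 using nz by (simp only: if_False)
          then show ?thesis by simp
        qed simp
      qed
      finally show ?thesis using False by simp
    qed
  qed
qed

lemma diag_preimage:
  "\<exists>g\<in>incidence. (\<forall>p q. p \<noteq> q \<longrightarrow> g p q = 0) \<and> \<phi> g = ebas a a"
proof -
  have ea: "(ebas a a :: 'a \<Rightarrow> 'a \<Rightarrow> 'k) \<in> incidence" by (rule ebas_inc) simp
  have surj: "\<phi> ` incidence = incidence" using lie_parts(1) unfolding bij_betw_def by blast
  obtain f where f: "f \<in> incidence" "ebas a a = \<phi> f"
  proof -
    have "ebas a a \<in> \<phi> ` incidence" using ea surj by simp
    then show ?thesis using that by (rule imageE)
  qed
  let ?f0 = "\<lambda>a b. if a = b then f a b else 0"
  have A: "\<phi> ?f0 = ebas a a"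
    unfolding phi_diagpart[OF f(1)] f(2)[symmetric] by (intro ext) (auto simp: ebas_def)
  have B: "?f0 \<in> incidence" by (simp add: incidence_def)
  have C: "\<forall>p q. p \<noteq> q \<longrightarrow> ?f0 p q = 0" by simp
  show ?thesis
  proof (rule bexI[of _ ?f0])
    show "(\<forall>p q. p \<noteq> q \<longrightarrow> ?f0 p q = 0) \<and> \<phi> ?f0 = ebas a a" using A C by (rule conjI[rotated])
  qed (rule B)
qed

lemma phi_ebas_form:
  assumes xy: "x < y"
  shows "\<exists>p q c. p < q \<and> c \<noteq> 0 \<and> \<phi> (ebas x y) = inc_smult c (ebas p q)"
proof -
  define w where "w = \<phi> (ebas x y)"
  have e: "(ebas x y :: 'a \<Rightarrow> 'a \<Rightarrow> 'k) \<in> incidence" using xy by (intro ebas_inc) simp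
  have winc: "w \<in> incidence" unfolding w_def using phi_inc e .
  have wdiag: "w u u = 0" for u unfolding w_def using phi_ebas_diag xy .
  have "ebas x y \<noteq> (\<lambda>a b. 0::'k)"
  proof (rule notI)
    assume "ebas x y = (\<lambda>a b. 0::'k)"
    then have "ebas x y x y = (0::'k)" by simp
    then show False by (simp add: ebas_def)
  qed
  have "w \<noteq> (\<lambda>a b. 0)"
  proof (rule notI)
    assume w0: "w = (\<lambda>a b. 0)"
    have inj: "inj_on \<phi> incidence" using lie_parts(1) unfolding bij_betw_def by blast
    have "\<phi> (ebas x y) = \<phi> (\<lambda>a b. 0)" using w0 phi_zero unfolding w_def by simp
    then have "ebas x y = (\<lambda>a b. 0::'k)" using inj_onD[OF inj _ e zero_inc] by blast
    then show False using \<open>ebas x y \<noteq> (\<lambda>a b. 0::'k)\<close> by simp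
  qed
  then obtain p q where pq: "w p q \<noteq> 0" by blast
  obtain G where G: "\<And>a. G a \<in> incidence" "\<And>a p q. p \<noteq> q \<Longrightarrow> G a p q = 0" "\<And>a. \<phi> (G a) = ebas a a"
    using diag_preimage by metis
  have br: "inc_bracket (G a) (ebas x y) = inc_smult (G a x x - G a y y) (ebas x y)" for a
  proof (intro ext)
    fix u v
    have G2: "\<forall>p q. p \<noteq> q \<longrightarrow> G a p q = 0" using G(2) by blast
    show "inc_bracket (G a) (ebas x y) u v = inc_smult (G a x x - G a y y) (ebas x y) u v"
      unfolding inc_bracket_def inc_smult_def mult_diag_left[OF G2 e] mult_diag_right[OF G2 e]
      by (simp add: ebas_def algebra_simps)
  qed
  have key: "(ebas a a u u - ebas a a v v) = G a x x - G a y y" if "w u v \<noteq> 0" for a u v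
  proof -
    have "\<phi> (inc_bracket (G a) (ebas x y)) = inc_bracket (ebas a a) w"
      using phi_bracket[OF G(1) e] G(3) unfolding w_def by simp
    moreover have "\<phi> (inc_bracket (G a) (ebas x y)) = inc_smult (G a x x - G a y y) w"
      unfolding br w_def by (rule phi_smult[OF e])
    ultimately have "inc_bracket (ebas a a) w u v = inc_smult (G a x x - G a y y) w u v" by simp
    moreover have "inc_bracket (ebas a a) w u v = (ebas a a u u - ebas a a v v) * w u v"
    proof -
      have E: "\<forall>p q. p \<noteq> q \<longrightarrow> ebas a a p q = (0::'k)" by (simp add: ebas_def)
      show ?thesis unfolding inc_bracket_def mult_diag_left[OF E winc] mult_diag_right[OF E winc]
        by (simp add: algebra_simps)
    qed
    ultimately show ?thesis using that by (simp add: inc_smult_def)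
  qed
  have ord: "u < v" if "w u v \<noteq> 0" for u v
  proof -
    have "u \<le> v" using winc that unfolding incidence_def by blast
    moreover have "u \<noteq> v" using wdiag that by auto
    ultimately show ?thesis by simp
  qed
  have uniq: "u = p \<and> v = q" if "w u v \<noteq> 0" for u v
  proof -
    have o1: "p < q" using ord pq . have o2: "u < v" using ord that .
    have k1: "(ebas p p p p::'k) - ebas p p q q = ebas p p u u - ebas p p v v"
      by (rule trans[OF key[OF pq, of p] key[OF that, of p, symmetric]])
    have k2: "(ebas q q p p::'k) - ebas q q q q = ebas q q u u - ebas q q v v"
      by (rule trans[OF key[OF pq, of q] key[OF that, of q, symmetric]])
    have pq': "p \<noteq> q" using o1 by simp
    have uv': "u \<noteq> v" using o2 by simp
    show ?thesis
    proof (cases "u = p")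
      case True
      then have qu: "q \<noteq> u" using pq' by simp
      have "q = v"
      proof (rule ccontr)
        assume "q \<noteq> v"
        then have "(-1::'k) = 0" using k2 pq' qu by (simp add: ebas_apply)
        then show False by simp
      qed
      then show ?thesis using True by simp
    next
      case False
      have pv: "p = v"
      proof (rule ccontr)
        assume "p \<noteq> v"
        then have "(1::'k) = 0" using k1 pq' False by (simp add: ebas_apply)
        then show False by simp
      qed
      have "q = u"
      proof (rule ccontr)
        assume "q \<noteq> u"
        then have "(-1::'k) = 0" using k2 pq' pv by (simp add: ebas_apply)
        then show False by simp
      qed
      then show ?thesis using o1 o2 pv by auto
    qed
  qed
  have "w = inc_smult (w p q) (ebas p q)"
  proof (intro ext)
    fix u v show "w u v = inc_smult (w p q) (ebas p q) u v"
    proof (cases "w u v = 0")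
      case True
      then have "\<not> (u = p \<and> v = q)" using pq by blast
      then have "ebas p q u v = (0::'k)" by (auto simp: ebas_def)
      then show ?thesis using True by (simp add: inc_smult_def)
    next
      case False
      then have "u = p" "v = q" using uniq by blast+
      then show ?thesis by (simp add: inc_smult_def ebas_def)
    qed
  qed
  then have "\<phi> (ebas x y) = inc_smult (w p q) (ebas p q)" unfolding w_def .
  then show ?thesis using pq ord[OF pq] by (intro exI conjI)
qed

end


lemma theta_sigma:
  fixes \<phi> :: "('a::{finite,order} \<Rightarrow> 'a \<Rightarrow> 'k::field) \<Rightarrow> ('a \<Rightarrow> 'a \<Rightarrow> 'k)"
  assumes eq: "\<phi> (ebas x y) = inc_smult c (ebas p q)" and c: "c \<noteq> 0" and pq: "p < q"
  shows "theta \<phi> (ebas x y) = ebas p q" "sigma \<phi> x y = c"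
proof -
  have th: "theta \<phi> (ebas x y) = ebas p q"
    unfolding theta_def
  proof (rule the_equality)
    show "ebas p q \<in> Bset \<and> (\<exists>k. k \<noteq> 0 \<and> \<phi> (ebas x y) = inc_smult k (ebas p q))"
      using eq c pq unfolding Bset_def by blast
  next
    fix d assume d: "d \<in> Bset \<and> (\<exists>k. k \<noteq> 0 \<and> \<phi> (ebas x y) = inc_smult k d)"
    then obtain p' q' k where d': "d = ebas p' q'" "k \<noteq> 0" "\<phi> (ebas x y) = inc_smult k d"
      unfolding Bset_def by blast
    have "inc_smult c (ebas p q) p q = inc_smult k (ebas p' q') p q" using eq d' by simp
    then have "c = k * (if p = p' \<and> q = q' then 1 else 0)" by (simp add: inc_smult_def ebas_def)
    then have "p = p' \<and> q = q'" using c by (cases "p = p' \<and> q = q'") auto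
    then show "d = ebas p q" using d' by simp
  qed
  show "theta \<phi> (ebas x y) = ebas p q" by (rule th)
  show "sigma \<phi> x y = c"
    unfolding sigma_def th
  proof (rule the_equality)
    show "c \<noteq> 0 \<and> \<phi> (ebas x y) = inc_smult c (ebas p q)" using c eq by simp
  next
    fix k assume "k \<noteq> 0 \<and> \<phi> (ebas x y) = inc_smult k (ebas p q)"
    then have "inc_smult c (ebas p q) p q = inc_smult k (ebas p q) p q" using eq by simp
    then show "k = c" by (simp add: inc_smult_def ebas_def)
  qed
qed

lemma ebas_mult_fun:
  assumes "(u::'a::{finite,order}) \<le> v" "v \<le> w"
  shows "inc_mult (ebas u v) (ebas v w) = (ebas u w :: 'a \<Rightarrow> 'a \<Rightarrow> 'k::field)"
  by (intro ext) (unfold ebas_mult ebas_apply, simp add: assms)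

lemma ebas_mult_zero:
  assumes "v \<noteq> u'"
  shows "inc_mult (ebas u v) (ebas u' v') = (\<lambda>a b. 0 :: 'k::field)"
  by (intro ext) (simp add: ebas_mult assms)

lemma ebas_nz: "ebas u v \<noteq> (\<lambda>a b. 0 :: 'k::field)"
proof
  assume "ebas u v = (\<lambda>a b. 0 :: 'k)"
  then have "ebas u v u v = (0::'k)" by simp
  then show False by (simp add: ebas_def)
qed

theorem lemma5p2:
  fixes \<phi> :: "('a::{finite,order} \<Rightarrow> 'a \<Rightarrow> 'k::field) \<Rightarrow> ('a \<Rightarrow> 'a \<Rightarrow> 'k)"
    and x y z :: 'a
  assumes "poset_connected TYPE('a)"
    and "elementary \<phi>"
    and "x < y" and "y < z"
  shows "(theta \<phi> (ebas x z) = inc_mult (theta \<phi> (ebas x y)) (theta \<phi> (ebas y z)) \<or>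
          theta \<phi> (ebas x z) = inc_mult (theta \<phi> (ebas y z)) (theta \<phi> (ebas x y))) \<and>
         (theta \<phi> (ebas x z) = inc_mult (theta \<phi> (ebas x y)) (theta \<phi> (ebas y z)) \<longrightarrow>
          sigma \<phi> x z = sigma \<phi> x y * sigma \<phi> y z) \<and>
         (theta \<phi> (ebas x z) = inc_mult (theta \<phi> (ebas y z)) (theta \<phi> (ebas x y)) \<longrightarrow>
          sigma \<phi> x z = - (sigma \<phi> x y * sigma \<phi> y z))"
proof -
  have lie: "lie_automorphism \<phi>" using assms(2) unfolding elementary_def by simp
  obtain \<psi> where til: "\<forall>f\<in>incidence. \<phi> f = tilde \<psi> f"
    using assms(2) unfolding elementary_def by blast
  have xz: "x < z" using assms(3,4) by simp
  obtain p1 q1 c1 where 1: "p1 < q1" "c1 \<noteq> 0" "\<phi> (ebas x y) = inc_smult c1 (ebas p1 q1)"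
    using phi_ebas_form[OF lie til assms(3)] by blast
  obtain p2 q2 c2 where 2: "p2 < q2" "c2 \<noteq> 0" "\<phi> (ebas y z) = inc_smult c2 (ebas p2 q2)"
    using phi_ebas_form[OF lie til assms(4)] by blast
  obtain p3 q3 c3 where 3: "p3 < q3" "c3 \<noteq> 0" "\<phi> (ebas x z) = inc_smult c3 (ebas p3 q3)"
    using phi_ebas_form[OF lie til xz] by blast
  note ts1 = theta_sigma[where \<phi>=\<phi>, OF 1(3) 1(2) 1(1)]
  note ts2 = theta_sigma[where \<phi>=\<phi>, OF 2(3) 2(2) 2(1)]
  note ts3 = theta_sigma[where \<phi>=\<phi>, OF 3(3) 3(2) 3(1)]
  have exy: "(ebas x y :: 'a \<Rightarrow> 'a \<Rightarrow> 'k) \<in> incidence" using assms(3) by (intro ebas_inc) simp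
  have eyz: "(ebas y z :: 'a \<Rightarrow> 'a \<Rightarrow> 'k) \<in> incidence" using assms(4) by (intro ebas_inc) simp
  have brk: "inc_bracket (ebas x y) (ebas y z) = (ebas x z :: 'a \<Rightarrow> 'a \<Rightarrow> 'k)"
  proof -
    have "inc_mult (ebas x y) (ebas y z) = (ebas x z :: 'a \<Rightarrow> 'a \<Rightarrow> 'k)"
      using assms(3,4) by (intro ebas_mult_fun) simp_all
    moreover have "inc_mult (ebas y z) (ebas x y) = (\<lambda>a b. 0 :: 'k)"
      using xz by (intro ebas_mult_zero) simp
    ultimately show ?thesis unfolding inc_bracket_def by simp
  qed
  have main: "\<phi> (ebas x z) = inc_bracket (\<phi> (ebas x y)) (\<phi> (ebas y z))"
    using phi_bracket[OF lie til exy eyz] brk by simp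
  have pt: "c3 * ebas p3 q3 a b = c1 * c2 * inc_mult (ebas p1 q1) (ebas p2 q2) a b
              - c2 * c1 * inc_mult (ebas p2 q2) (ebas p1 q1) a b" for a b
  proof -
    have "\<phi> (ebas x z) a b = inc_bracket (\<phi> (ebas x y)) (\<phi> (ebas y z)) a b" using main by simp
    then show ?thesis unfolding 1(3) 2(3) 3(3) inc_bracket_def smult_mult
      by (simp add: inc_smult_def)
  qed
  have at: "c3 = c1 * c2 * (if q1 = p2 \<and> p1 \<le> q1 \<and> q1 \<le> q2 \<and> p3 = p1 \<and> q3 = q2 then 1 else 0)
              - c2 * c1 * (if q2 = p1 \<and> p2 \<le> q2 \<and> q2 \<le> q1 \<and> p3 = p2 \<and> q3 = q1 then 1 else 0)"
    using pt[of p3 q3] unfolding ebas_mult ebas_apply by simp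
  have notboth: "\<not> (q1 = p2 \<and> q2 = p1)" using 1(1) 2(1) by auto
  consider (A) "q1 = p2" "p3 = p1" "q3 = q2" | (B) "q2 = p1" "p3 = p2" "q3 = q1"
  proof (rule ccontr)
    assume h: "\<not> thesis"
    have n1: "\<not> (q1 = p2 \<and> p1 \<le> q1 \<and> q1 \<le> q2 \<and> p3 = p1 \<and> q3 = q2)" using h that(1) by blast
    have n2: "\<not> (q2 = p1 \<and> p2 \<le> q2 \<and> q2 \<le> q1 \<and> p3 = p2 \<and> q3 = q1)" using h that(2) by blast
    have "c3 = 0" using at by (simp only: n1 n2 if_False mult_zero_right diff_zero)
    then show False using 3(2) by simp
  qed
  then show ?thesis
  proof cases
    case A
    have m1: "inc_mult (ebas p1 q1) (ebas p2 q2) = (ebas p1 q2 :: 'a \<Rightarrow> 'a \<Rightarrow> 'k)"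
      using ebas_mult_fun[of p1 q1 q2, where 'k='k] A 1(1) 2(1) by simp
    have q2p1: "q2 \<noteq> p1" using A notboth by blast
    have m2: "inc_mult (ebas p2 q2) (ebas p1 q1) = (\<lambda>a b. 0 :: 'k)"
      using q2p1 by (intro ebas_mult_zero)
    have c3v: "c3 = c1 * c2" using at A less_imp_le[OF 1(1)] less_imp_le[OF 2(1)] q2p1 by simp
    have t3: "theta \<phi> (ebas x z) = ebas p1 q2" using ts3(1) A by simp
    show ?thesis
      unfolding ts1(1) ts2(1) t3 m1 m2 ts1(2) ts2(2) ts3(2)
      using ebas_nz[of p1 q2, where 'k='k] c3v by simp
  next
    case B
    have m1: "inc_mult (ebas p2 q2) (ebas p1 q1) = (ebas p2 q1 :: 'a \<Rightarrow> 'a \<Rightarrow> 'k)"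
      using ebas_mult_fun[of p2 q2 q1, where 'k='k] B 1(1) 2(1) by simp
    have q1p2: "q1 \<noteq> p2" using B notboth by blast
    have m2: "inc_mult (ebas p1 q1) (ebas p2 q2) = (\<lambda>a b. 0 :: 'k)"
      using q1p2 by (intro ebas_mult_zero)
    have c3v: "c3 = - (c1 * c2)" using at B less_imp_le[OF 1(1)] less_imp_le[OF 2(1)] q1p2 by (simp add: mult.commute)
    have t3: "theta \<phi> (ebas x z) = ebas p2 q1" using ts3(1) B by simp
    show ?thesis
      unfolding ts1(1) ts2(1) t3 m1 m2 ts1(2) ts2(2) ts3(2)
      using ebas_nz[of p2 q1, where 'k='k] c3v by simp
  qed
qed

end
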